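(* Let $t$ be a positive integer. The map sending a partition to its $V_{2t+2,t}$-coding is injective on $\mathcal{DD}_{(2t+2)}$, and the map sending a partition to its $V_{2t,t}$-coding is injective on $\mathcal{SC}_{(2t)}$; that is, each element of $\mathcal{DD}_{(2t+2)}$ (respectively $\mathcal{SC}_{(2t)}$) is in bijective correspondence with its $V_{g,t}$-coding, where $g=2t+2$ (respectively $g=2t$).
   Context: A partition $\lambda=(\lambda_1\geq\lambda_2\geq\dots)$ (with $\lambda_i=0$ for $i>\ell(\lambda)$) has Ferrers diagram consisting of boxes $(i,j)$ with $1\leq j\leq\lambda_i$; $\lambda'$ is the conjugate partition. The hook length of a box $(i,j)$ is $\lambda_i-j+\lambda'_j-i+1$. The Durfee size is $d_\lambda=\max\{s:\lambda_s\geq s\}$. A partition is a $k$-core if none of its hook lengths is divisible by $k$. $\mathcal{DD}$ is the set of partitions $\lambda$ with $\lambda_i=\lambda'_i+1$ for all $1\leq i\leq d_\lambda$; $\mathcal{SC}$ is the set of self-conjugate partitions ($\lambda=\lambda'$); $\mathcal{DD}_{(k)}$, $\mathcal{SC}_{(k)}$ denote their subsets of $k$-cores. $V_{g,t}$-coding (for integers $1\leq t\leq g$): for a partition $\lambda$ and each residue $r\in\{0,\dots,g-1\}$, let $\beta_r=g+\max\{\lambda_j-j: j\geq 1,\ \lambda_j-j\equiv r \pmod g\}$ ($j$ ranging over all positive integers, $\lambda_j=0$ for $j>\ell(\lambda)$). These are distinct; list them decreasingly $\beta_{\sigma(1)}>\dots>\beta_{\sigma(g)}$. The $V_{g,t}$-coding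 of $\lambda$ is $(v_1,\dots,v_t)=(\beta_{\sigma(1)},\dots,\beta_{\sigma(t)})\in\mathbb{Z}^t$. *)

theory Defs
  imports Main
begin

definition is_partition :: "nat list \<Rightarrow> bool" where
  "is_partition la \<longleftrightarrow> sorted_wrt (\<ge>) la \<and> 0 \<notin> set la"

definition part :: "nat list \<Rightarrow> nat \<Rightarrow> nat" where
  "part la i = (if 1 \<le> i \<and> i \<le> length la then la ! (i - 1) else 0)"

definition conjp :: "nat list \<Rightarrow> nat \<Rightarrow> nat" where
  "conjp la j = card {i. 1 \<le> i \<and> i \<le> length la \<and> j \<le> part la i}"

definition boxes :: "nat list \<Rightarrow> (nat \<times> nat) set" where
  "boxes la = {(i, j). 1 \<le> i \<and> 1 \<le> j \<and> j \<le> part la i}"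

definition hook :: "nat list \<Rightarrow> nat \<Rightarrow> nat \<Rightarrow> int" where
  "hook la i j = int (part la i) - int j + int (conjp la j) - int i + 1"

definition durfee :: "nat list \<Rightarrow> nat" where
  "durfee la = Max ({0} \<union> {s. 1 \<le> s \<and> s \<le> length la \<and> s \<le> part la s})"

definition is_core :: "nat \<Rightarrow> nat list \<Rightarrow> bool" where
  "is_core k la \<longleftrightarrow> (\<forall>(i, j) \<in> boxes la. \<not> (int k dvd hook la i j))"

definition is_DD :: "nat list \<Rightarrow> bool" where
  "is_DD la \<longleftrightarrow> (\<forall>i. 1 \<le> i \<and> i \<le> durfee la \<longrightarrow> part la i = conjp la i + 1)"

definition is_SC :: "nat list \<Rightarrow> bool" where
  "is_SC la \<longleftrightarrow> (\<forall>i\<ge>1. part la i = conjp la i)"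

definition DD_core :: "nat \<Rightarrow> nat list set" where
  "DD_core k = {la. is_partition la \<and> is_DD la \<and> is_core k la}"

definition SC_core :: "nat \<Rightarrow> nat list set" where
  "SC_core k = {la. is_partition la \<and> is_SC la \<and> is_core k la}"

definition beta :: "nat \<Rightarrow> nat list \<Rightarrow> nat \<Rightarrow> int" where
  "beta g la r = int g + Sup {int (part la j) - int j | j. 1 \<le> j \<and>
       (int (part la j) - int j) mod int g = int r}"

definition Vcoding :: "nat \<Rightarrow> nat \<Rightarrow> nat list \<Rightarrow> int list" where
  "Vcoding g t la = take t (rev (sort (map (beta g la) [0..<g])))"

end

theory Submission
  imports Defs
begin


definition Sset :: "nat list \<Rightarrow> int set" where
  "Sset la = {int (part la j) - int j | j. 1 \<le> j}"

lemma part_mono: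
  assumes "is_partition la" "1 \<le> i" "i \<le> i'"
  shows "part la i' \<le> part la i"
proof (cases "i' \<le> length la")
  case True
  have "sorted_wrt (\<ge>) la" using assms(1) by (simp add: is_partition_def)
  then have "la ! (i - 1) \<ge> la ! (i' - 1)" if "i < i'"
    using True that assms(2) by (auto simp: sorted_wrt_iff_nth_less)
  then show ?thesis using True assms by (cases "i = i'") (auto simp: part_def)
next
  case False
  then show ?thesis by (simp add: part_def)
qed

lemma part_pos:
  assumes "is_partition la" "1 \<le> i"
  shows "0 < part la i \<longleftrightarrow> i \<le> length la"
proof
  assume "i \<le> length la"
  then have "la ! (i - 1) \<in> set la" using assms by auto
  moreover have "0 \<notin> set la" using assms(1) by (simp add: is_partition_def)
  ultimately have "la ! (i - 1) \<noteq> 0" by metis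
  then show "0 < part la i" using assms \<open>i \<le> length la\<close> by (simp add: part_def)
qed (auto simp: part_def split: if_splits)

lemma conj_iff:
  assumes "is_partition la" "1 \<le> i" "1 \<le> j"
  shows "j \<le> part la i \<longleftrightarrow> i \<le> conjp la j"
proof -
  define A where "A = {i. 1 \<le> i \<and> i \<le> length la \<and> j \<le> part la i}"
  have fin: "finite A" unfolding A_def by auto
  have memA: "i' \<in> A \<longleftrightarrow> 1 \<le> i' \<and> j \<le> part la i'" for i'
    using part_pos[OF assms(1), of i'] assms(3) unfolding A_def by auto
  show ?thesis
  proof
    assume "j \<le> part la i"
    then have "{1..i} \<subseteq> A" using memA part_mono[OF assms(1)] by (meson atLeastAtMost_iff le_trans subsetI)
    then have "card {1..i} \<le> card A" using fin card_mono by blast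
    then show "i \<le> conjp la j" by (simp add: conjp_def A_def)
  next
    assume h: "i \<le> conjp la j"
    show "j \<le> part la i"
    proof (rule ccontr)
      assume "\<not> j \<le> part la i"
      have "A \<subseteq> {1..i-1}"
      proof
        fix x assume "x \<in> A"
        then have x: "1 \<le> x" "j \<le> part la x" using memA by auto
        have "x \<le> i - 1"
        proof (rule ccontr)
          assume "\<not> x \<le> i - 1"
          then have "part la x \<le> part la i" using part_mono[OF assms(1) assms(2)] by simp
          then show False using x \<open>\<not> j \<le> part la i\<close> by simp
        qed
        then show "x \<in> {1..i-1}" using x by simp
      qed
      then have "card A \<le> card {1..i-1}" by (intro card_mono) auto
      moreover have "conjp la j = card A" by (simp add: conjp_def A_def)
      ultimately show False using h assms(2) by simp
    qed
  qed
qed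

lemma compl_notin:
  assumes "is_partition la" "1 \<le> j"
  shows "int j - 1 - int (conjp la j) \<notin> Sset la"
proof
  assume "int j - 1 - int (conjp la j) \<in> Sset la"
  then obtain i where i: "1 \<le> i" "int j - 1 - int (conjp la j) = int (part la i) - int i"
    by (auto simp: Sset_def)
  show False
  proof (cases "i \<le> conjp la j")
    case True
    then have "j \<le> part la i" using conj_iff[OF assms(1) i(1) assms(2)] by simp
    then show False using i True by linarith
  next
    case False
    then have "\<not> j \<le> part la i" using conj_iff[OF assms(1) i(1) assms(2)] by simp
    then show False using i False by linarith
  qed
qed

lemma compl_exists:
  assumes "is_partition la" "y \<notin> Sset la"
  shows "\<exists>j\<ge>1. y = int j - 1 - int (conjp la j)"
proof -
  define P where "P i' = (1 \<le> i' \<and> int (part la i') - int i' < y)" for i'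
  define i1 where "i1 = length la + 1 + nat \<bar>y\<bar>"
  have "P i1" unfolding P_def i1_def by (simp add: part_def)
  define i0 where "i0 = (LEAST i. P i)"
  have P0: "P i0" unfolding i0_def using \<open>P i1\<close> by (rule LeastI)
  have below: "int (part la i) - int i > y" if "1 \<le> i" "i < i0" for i
  proof -
    have "\<not> P i" using that unfolding i0_def using not_less_Least by blast
    then have "int (part la i) - int i \<ge> y" using that unfolding P_def by simp
    moreover have "int (part la i) - int i \<noteq> y" using assms(2) that by (auto simp: Sset_def)
    ultimately show ?thesis by simp
  qed
  have i0: "1 \<le> i0" "int (part la i0) - int i0 < y" using P0 unfolding P_def by auto
  define j where "j = nat (y + int i0)"
  have yj: "y + int i0 \<ge> 1" using i0 by linarith
  then have j1: "1 \<le> j" and jeq: "int j = y + int i0" unfolding j_def by auto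
  have "\<not> j \<le> part la i0" using i0 jeq by linarith
  then have c1: "\<not> i0 \<le> conjp la j" using conj_iff[OF assms(1) i0(1) j1] by simp
  have c2: "i0 - 1 \<le> conjp la j"
  proof (cases "i0 = 1")
    case False
    then have "int (part la (i0 - 1)) - int (i0 - 1) > y" using below[of "i0 - 1"] i0 by simp
    then have "j \<le> part la (i0 - 1)" using jeq i0 False by linarith
    then show ?thesis using conj_iff[OF assms(1) _ j1, of "i0 - 1"] i0 False by simp
  qed simp
  have "conjp la j = i0 - 1" using c1 c2 by simp
  then show ?thesis using j1 jeq i0 by (intro exI[of _ j]) auto
qed

lemma core_down:
  assumes "is_partition la" "is_core g la" "1 \<le> g" "x \<in> Sset la"
  shows "x - int g \<in> Sset la"
proof (rule ccontr)
  assume "x - int g \<notin> Sset la"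
  then obtain j where j: "1 \<le> j" "x - int g = int j - 1 - int (conjp la j)"
    using compl_exists[OF assms(1)] by blast
  obtain i where i: "1 \<le> i" "x = int (part la i) - int i" using assms(4) by (auto simp: Sset_def)
  have "j \<le> part la i"
  proof (rule ccontr)
    assume "\<not> j \<le> part la i"
    then have "\<not> i \<le> conjp la j" using conj_iff[OF assms(1) i(1) j(1)] by simp
    then show False using i j assms(3) \<open>\<not> j \<le> part la i\<close> by linarith
  qed
  then have "(i, j) \<in> boxes la" using i j by (simp add: boxes_def)
  moreover have "hook la i j = int g" using i j by (simp add: hook_def)
  ultimately show False using assms(2) by (auto simp: is_core_def)
qed

lemma S_low:
  assumes "length la < j"
  shows "- int j \<in> Sset la"
  using assms unfolding Sset_def part_def by (intro CollectI exI[of _ j]) auto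

lemma S_bound:
  assumes "is_partition la" "x \<in> Sset la"
  shows "x \<le> int (part la 1) - 1"
proof -
  obtain i where i: "1 \<le> i" "x = int (part la i) - int i" using assms(2) by (auto simp: Sset_def)
  have "part la i \<le> part la 1" using part_mono[OF assms(1), of 1 i] i by simp
  then show ?thesis using i by linarith
qed

lemma S_inj:
  assumes "is_partition la" "is_partition mu" "Sset la = Sset mu"
  shows "la = mu"
proof -
  define f where "f l i = int (part l i) - int i" for l i
  have fdec: "f l i' < f l i" if "is_partition l" "1 \<le> i" "i < i'" for l i i'
    using part_mono[OF that(1) that(2), of i'] that unfolding f_def by linarith
  have finj: "i = i'" if "is_partition l" "1 \<le> i" "1 \<le> i'" "f l i = f l i'" for l i i'
    using fdec[OF that(1) that(2), of i'] fdec[OF that(1) that(3), of i] that(4)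
    by (metis less_irrefl nat_neq_iff)
  have key: "\<forall>i. 1 \<le> i \<and> i \<le> n \<longrightarrow> f la i = f mu i" for n
  proof (induction n)
    case 0 then show ?case by simp
  next
    case (Suc n)
    have step: "f l (Suc n) \<le> f l' (Suc n)" if l: "is_partition l" "is_partition l'" "Sset l = Sset l'"
      "\<forall>i. 1 \<le> i \<and> i \<le> n \<longrightarrow> f l i = f l' i" for l l'
    proof -
      have "f l (Suc n) \<in> Sset l" unfolding Sset_def f_def
        by (intro CollectI exI[of _ "Suc n"]) auto
      then have "f l (Suc n) \<in> Sset l'" using l(3) by simp
      then obtain k where k: "1 \<le> k" "f l (Suc n) = f l' k" unfolding Sset_def f_def by auto
      have "\<not> k \<le> n"
      proof
        assume "k \<le> n"
        then have "f l k = f l (Suc n)" using l(4) k by simp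
        then have "k = Suc n" using finj[OF l(1) k(1)] by simp
        then show False using \<open>k \<le> n\<close> by simp
      qed
      then have "Suc n \<le> k" by simp
      then have "f l' k \<le> f l' (Suc n)" using fdec[OF l(2), of "Suc n" k] by (cases "k = Suc n") auto
      then show ?thesis using k by simp
    qed
    have "f la (Suc n) \<le> f mu (Suc n)" using step[OF assms] Suc.IH by blast
    moreover have "f mu (Suc n) \<le> f la (Suc n)" using step[OF assms(2,1) assms(3)[symmetric]] Suc.IH by auto
    ultimately show ?case using Suc.IH by (metis le_Suc_eq order_antisym)
  qed
  have pe: "part la i = part mu i" if "1 \<le> i" for i
    using key[of i] that unfolding f_def by simp
  have len: "length la = length mu"
  proof (rule ccontr)
    assume "length la \<noteq> length mu"
    then consider "length la < length mu" | "length mu < length la" by linarith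
    then show False
    proof cases
      case 1
      then show False using pe[of "Suc (length la)"] part_pos[OF assms(1), of "Suc (length la)"]
        part_pos[OF assms(2), of "Suc (length la)"] by simp
    next
      case 2
      then show False using pe[of "Suc (length mu)"] part_pos[OF assms(1), of "Suc (length mu)"]
        part_pos[OF assms(2), of "Suc (length mu)"] by simp
    qed
  qed
  show ?thesis
  proof (rule nth_equalityI[OF len])
    fix i assume "i < length la"
    then show "la ! i = mu ! i" using pe[of "Suc i"] len by (simp add: part_def)
  qed
qed

lemma durfee_ge:
  assumes "is_partition la" "1 \<le> i" "i \<le> part la i"
  shows "i \<le> durfee la"
proof -
  have "0 < part la i" using assms by simp
  then have "i \<le> length la" using part_pos[OF assms(1,2)] by simp
  then have "i \<in> {0} \<union> {s. 1 \<le> s \<and> s \<le> length la \<and> s \<le> part la s}" using assms by simp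
  moreover have "finite ({0} \<union> {s. 1 \<le> s \<and> s \<le> length la \<and> s \<le> part la s})" by auto
  ultimately show ?thesis unfolding durfee_def by (rule Max_ge[rotated])
qed

lemma DD_rel:
  assumes "is_partition la" "is_DD la" "1 \<le> i" "i \<le> part la i"
  shows "part la i = conjp la i + 1"
  using assms durfee_ge[OF assms(1,3,4)] unfolding is_DD_def by blast

lemma DD_sym:
  assumes "is_partition la" "is_DD la"
  shows "0 \<notin> Sset la" "x \<noteq> 0 \<Longrightarrow> (x \<in> Sset la \<longleftrightarrow> - x \<notin> Sset la)"
proof -
  show "0 \<notin> Sset la"
  proof
    assume "0 \<in> Sset la"
    then obtain i where i: "1 \<le> i" "0 = int (part la i) - int i" by (auto simp: Sset_def)
    then have pi: "part la i = i" by linarith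
    then have "part la i = conjp la i + 1" using DD_rel[OF assms i(1)] by simp
    moreover have "i \<le> conjp la i" using conj_iff[OF assms(1) i(1) i(1)] pi by simp
    ultimately show False using pi by simp
  qed
  have pos: "x \<in> Sset la \<longleftrightarrow> - x \<notin> Sset la" if "1 \<le> x" for x
  proof
    assume "x \<in> Sset la"
    then obtain i where i: "1 \<le> i" "x = int (part la i) - int i" by (auto simp: Sset_def)
    then have "i \<le> part la i" using that by linarith
    then have "part la i = conjp la i + 1" using DD_rel[OF assms i(1)] by simp
    then have "- x = int i - 1 - int (conjp la i)" using i by simp
    then show "- x \<notin> Sset la" using compl_notin[OF assms(1) i(1)] by simp
  next
    assume "- x \<notin> Sset la"
    then obtain j where j: "1 \<le> j" "- x = int j - 1 - int (conjp la j)"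
      using compl_exists[OF assms(1)] by blast
    then have "j \<le> conjp la j" using that by linarith
    then have "j \<le> part la j" using conj_iff[OF assms(1) j(1) j(1)] by simp
    then have "part la j = conjp la j + 1" using DD_rel[OF assms j(1)] by simp
    then have "x = int (part la j) - int j" using j by simp
    then show "x \<in> Sset la" using j(1) unfolding Sset_def by blast
  qed
  assume "x \<noteq> 0"
  then consider "1 \<le> x" | "1 \<le> - x" by linarith
  then show "x \<in> Sset la \<longleftrightarrow> - x \<notin> Sset la"
  proof cases
    case 1 then show ?thesis using pos by simp
  next
    case 2 then show ?thesis using pos[of "- x"] by auto
  qed
qed

lemma SC_sym:
  assumes "is_partition la" "is_SC la"
  shows "x \<in> Sset la \<longleftrightarrow> - 1 - x \<notin> Sset la"
proof
  assume "x \<in> Sset la"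
  then obtain i where i: "1 \<le> i" "x = int (part la i) - int i" by (auto simp: Sset_def)
  have "part la i = conjp la i" using assms(2) i(1) by (simp add: is_SC_def)
  then have eq: "- 1 - x = int i - 1 - int (conjp la i)" using i by simp
  show "- 1 - x \<notin> Sset la" unfolding eq by (rule compl_notin[OF assms(1) i(1)])
next
  assume "- 1 - x \<notin> Sset la"
  then obtain j where j: "1 \<le> j" "- 1 - x = int j - 1 - int (conjp la j)"
    using compl_exists[OF assms(1)] by blast
  have "part la j = conjp la j" using assms(2) j(1) by (simp add: is_SC_def)
  then have "x = int (part la j) - int j" using j by simp
  then show "x \<in> Sset la" using j(1) unfolding Sset_def by blast
qed



definition M :: "int set \<Rightarrow> int \<Rightarrow> int \<Rightarrow> int" where
  "M A g r = Sup {x \<in> A. x mod g = r}"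

locale dset =
  fixes A :: "int set" and g :: int
  assumes gpos: "0 < g"
    and down: "x \<in> A \<Longrightarrow> x - g \<in> A"
    and bdd: "\<exists>b. \<forall>x\<in>A. x \<le> b"
    and low: "\<exists>n. \<forall>x\<le>n. x \<in> A"
begin

lemma down_iter: "x \<in> A \<Longrightarrow> x - int k * g \<in> A"
proof (induction k)
  case 0 then show ?case by simp
next
  case (Suc k)
  then have "x - int k * g - g \<in> A" using down by blast
  then show ?case by (simp add: algebra_simps)
qed

lemma down_le:
  assumes "x \<in> A" "y \<le> x" "y mod g = x mod g"
  shows "y \<in> A"
proof -
  have "g dvd (x - y)" using assms(3) by (metis mod_eq_dvd_iff)
  then obtain k where k: "x - y = g * k" by (auto simp: dvd_def)
  have "k \<ge> 0" using k assms(2) gpos by (metis diff_ge_0_iff_ge zero_le_mult_iff not_less)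
  then have y: "y = x - int (nat k) * g" using k by (simp add: algebra_simps)
  show ?thesis unfolding y by (rule down_iter[OF assms(1)])
qed

lemma class_ne:
  assumes "0 \<le> r" "r < g"
  shows "\<exists>x\<in>A. x mod g = r"
proof -
  obtain n where n: "\<forall>x\<le>n. x \<in> A" using low by blast
  define k where "k = \<bar>n\<bar> + \<bar>r\<bar>"
  have "k \<ge> 0" unfolding k_def by simp
  then have "1 * k \<le> g * k" using gpos by (intro mult_right_mono) auto
  then have "k \<le> g * k" by simp
  then have "r - g * k \<le> n" unfolding k_def by linarith
  then have "r - g * k \<in> A" using n by blast
  moreover have "(r - g * k) mod g = r" using assms
    by (metis add.commute diff_conv_add_uminus mod_mult_self2 mult.commute mult_minus_right mod_pos_pos_trivial)
  ultimately show ?thesis by blast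
qed

lemma M_props:
  assumes "0 \<le> r" "r < g"
  shows "M A g r \<in> A" "M A g r mod g = r" "\<And>x. x \<in> A \<Longrightarrow> x mod g = r \<Longrightarrow> x \<le> M A g r"
proof -
  define C where "C = {x \<in> A. x mod g = r}"
  have ne: "C \<noteq> {}" using class_ne[OF assms] C_def by blast
  obtain b where b: "\<forall>x\<in>A. x \<le> b" using bdd by blast
  have bd: "bdd_above C" unfolding bdd_above_def C_def using b by blast
  have ub: "x \<le> Sup C" if "x \<in> C" for x using cSup_upper[OF that bd] .
  have "Sup C - 1 < Sup C" by simp
  then obtain x where x: "x \<in> C" "Sup C - 1 < x" using less_cSupD[OF ne] by blast
  then have "x = Sup C" using ub[OF x(1)] by linarith
  then have "Sup C \<in> C" using x by simp
  then show "M A g r \<in> A" "M A g r mod g = r" unfolding M_def C_def[symmetric] by (auto simp: C_def)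
  show "\<And>x. x \<in> A \<Longrightarrow> x mod g = r \<Longrightarrow> x \<le> M A g r" unfolding M_def C_def[symmetric]
    using ub C_def by blast
qed

lemma M_unique:
  assumes "0 \<le> r" "r < g" "m \<in> A" "m mod g = r" "m + g \<notin> A"
  shows "M A g r = m"
proof -
  have "m \<le> M A g r" using M_props(3)[OF assms(1,2) assms(3,4)] .
  moreover have "M A g r \<le> m"
  proof (rule ccontr)
    assume "\<not> M A g r \<le> m"
    have "g dvd (M A g r - m)" using M_props(2)[OF assms(1,2)] assms(4) by (metis mod_eq_dvd_iff)
    then have "g \<le> M A g r - m" using \<open>\<not> M A g r \<le> m\<close> by (intro zdvd_imp_le) auto
    then have "m + g \<le> M A g r" by simp
    then have "m + g \<in> A" using down_le[OF M_props(1)[OF assms(1,2)], of "m + g"]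
      M_props(2)[OF assms(1,2)] assms(4) by simp
    then show False using assms(5) by simp
  qed
  ultimately show ?thesis by simp
qed

lemma mem_iff: "x \<in> A \<longleftrightarrow> x \<le> M A g (x mod g)"
proof
  assume "x \<in> A" then show "x \<le> M A g (x mod g)" using M_props(3)[of "x mod g" x] gpos by simp
next
  assume h: "x \<le> M A g (x mod g)"
  have "0 \<le> x mod g" "x mod g < g" using gpos by auto
  then show "x \<in> A" using down_le[OF M_props(1), OF _ _ h] M_props(2) by simp
qed

end

lemma Sset_dset:
  assumes "is_partition la" "is_core g la" "1 \<le> g"
  shows "dset (Sset la) (int g)"
proof
  show "0 < int g" using assms by simp
  show "x - int g \<in> Sset la" if "x \<in> Sset la" for x using core_down[OF assms that] .
  show "\<exists>b. \<forall>x\<in>Sset la. x \<le> b" using S_bound[OF assms(1)] by blast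
  show "\<exists>n. \<forall>x\<le>n. x \<in> Sset la"
  proof (intro exI allI impI)
    fix x :: int assume "x \<le> - int (Suc (length la))"
    then have "- int (nat (- x)) = x" "length la < nat (- x)" by auto
    then show "x \<in> Sset la" using S_low[of la "nat (- x)"] by metis
  qed
qed

lemma beta_M: "beta g la r = int g + M (Sset la) (int g) (int r)"
proof -
  have "{int (part la j) - int j | j. 1 \<le> j \<and> (int (part la j) - int j) mod int g = int r}
      = {x \<in> Sset la. x mod int g = int r}" unfolding Sset_def by blast
  then show ?thesis unfolding beta_def M_def by simp
qed



lemma take_filter_sorted:
  "sorted_wrt (\<ge>) ys \<Longrightarrow> take (length (filter (\<lambda>x. c < x) ys)) ys = filter (\<lambda>x. c < x) ys"
  for ys :: "int list"
proof (induction ys)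
  case Nil then show ?case by simp
next
  case (Cons y ys)
  show ?case
  proof (cases "c < y")
    case True then show ?thesis using Cons by simp
  next
    case False
    then have "\<forall>x\<in>set ys. \<not> c < x" using Cons.prems by auto
    then have "filter (\<lambda>x. c < x) ys = []" by (simp add: filter_empty_conv)
    then show ?thesis using False by simp
  qed
qed

lemma Vset:
  fixes xs :: "int list"
  assumes "length (filter (\<lambda>x. c < x) xs) = t"
  shows "set (take t (rev (sort xs))) = {x \<in> set xs. c < x}"
proof -
  define ys where "ys = rev (sort xs)"
  have s: "sorted_wrt (\<ge>) ys" unfolding ys_def by (simp add: sorted_wrt_rev)
  have "length (filter (\<lambda>x. c < x) ys) = length (filter (\<lambda>x. c < x) xs)"
    unfolding ys_def by (simp add: rev_filter[symmetric] filter_sort)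
  then have "take t ys = filter (\<lambda>x. c < x) ys" using take_filter_sorted[OF s, of c] assms by simp
  moreover have "set ys = set xs" unfolding ys_def by simp
  ultimately show ?thesis unfolding ys_def[symmetric] by auto
qed

lemma count_map:
  "length (filter P (map b [0..<g])) = card {r. r < g \<and> P (b r)}"
proof -
  have "length (filter P (map b [0..<g])) = length (filter (P \<circ> b) [0..<g])"
    by (simp add: filter_map)
  also have "\<dots> = card (set (filter (P \<circ> b) [0..<g]))" by (rule distinct_card[symmetric]) simp
  also have "set (filter (P \<circ> b) [0..<g]) = {r. r < g \<and> P (b r)}" by auto
  finally show ?thesis .
qed

definition DDb :: "nat \<Rightarrow> (nat \<Rightarrow> int) \<Rightarrow> bool" where
  "DDb t b \<longleftrightarrow> (\<forall>r<2*t+2. b r mod int (2*t+2) = int r) \<and>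
     (\<forall>r. 0 < r \<and> r < 2*t+2 \<and> r \<noteq> t+1 \<longrightarrow> b r + b (2*t+2-r) = int (2*t+2)) \<and>
     b 0 = 0 \<and> b (t+1) = int (t+1)"

definition SCb :: "nat \<Rightarrow> (nat \<Rightarrow> int) \<Rightarrow> bool" where
  "SCb t b \<longleftrightarrow> (\<forall>r<2*t. b r mod int (2*t) = int r) \<and>
     (\<forall>r<2*t. b r + b (2*t-1-r) = int (2*t) - 1)"

lemma DD_count:
  assumes "DDb t b"
  shows "card {r. r < 2*t+2 \<and> int (t+1) < b r} = t"
proof -
  define A where "A = {r. r < 2*t+2 \<and> int (t+1) < b r}"
  define f where "f r = (if r \<le> t then r else 2*t+2 - r)" for r :: nat
  have b0: "b 0 = 0" and bt: "b (t+1) = int (t+1)" using assms by (auto simp: DDb_def)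
  have pair: "b r + b (2*t+2-r) = int (2*t+2)" if "0 < r" "r < 2*t+2" "r \<noteq> t+1" for r
    using assms that by (auto simp: DDb_def)
  have "inj_on f A"
  proof (rule inj_onI)
    fix x y assume xy: "x \<in> A" "y \<in> A" "f x = f y"
    have nz: "z \<noteq> 0" "z \<noteq> t+1" if "z \<in> A" for z
    proof -
      show "z \<noteq> 0" proof assume "z = 0" then show False using that b0 unfolding A_def by simp qed
      show "z \<noteq> t+1" proof assume "z = t+1" then show False using that bt unfolding A_def by simp qed
    qed
    show "x = y"
    proof (rule ccontr)
      assume "x \<noteq> y"
      then have "y = 2*t+2-x \<or> x = 2*t+2-y" using xy unfolding f_def A_def by (auto split: if_splits)
      then show False
      proof
        assume "y = 2*t+2-x"
        then show False using pair[of x] xy nz[OF xy(1)] unfolding A_def by auto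
      next
        assume "x = 2*t+2-y"
        then show False using pair[of y] xy nz[OF xy(2)] unfolding A_def by auto
      qed
    qed
  qed
  moreover have "f ` A = {1..t}"
  proof
    show "f ` A \<subseteq> {1..t}"
    proof
      fix k assume "k \<in> f ` A"
      then obtain r where r: "r \<in> A" "k = f r" by blast
      have "r \<noteq> 0" proof assume "r = 0" then show False using r b0 unfolding A_def by simp qed
      have "r \<noteq> t+1" proof assume "r = t+1" then show False using r bt unfolding A_def by simp qed
      then show "k \<in> {1..t}" using r \<open>r \<noteq> 0\<close> unfolding A_def f_def by auto
    qed
  next
    show "{1..t} \<subseteq> f ` A"
    proof
      fix k assume k: "k \<in> {1..t}"
      show "k \<in> f ` A"
      proof (cases "int (t+1) < b k")
        case True
        then have "k \<in> A" "f k = k" using k unfolding A_def f_def by auto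
        then show ?thesis by force
      next
        case False
        have "b k + b (2*t+2-k) = int (2*t+2)" using pair[of k] k by auto
        moreover have "b k \<noteq> int (t+1)"
        proof
          assume "b k = int (t+1)"
          moreover have "b k mod int (2*t+2) = int k" using assms k by (auto simp: DDb_def)
          ultimately have "int (t+1) mod int (2*t+2) = int k" by simp
          moreover have "int (t+1) mod int (2*t+2) = int (t+1)" by (intro mod_pos_pos_trivial) auto
          ultimately show False using k by simp
        qed
        ultimately have "2*t+2-k \<in> A" "f (2*t+2-k) = k" using k False unfolding A_def f_def by auto
        then show ?thesis by force
      qed
    qed
  qed
  ultimately have "bij_betw f A {1..t}" unfolding bij_betw_def by blast
  then show ?thesis unfolding A_def[symmetric] by (simp add: bij_betw_same_card)
qed

lemma SC_count:
  assumes "SCb t b"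
  shows "card {r. r < 2*t \<and> int t - 1 < b r} = t"
proof -
  define A where "A = {r. r < 2*t \<and> int t - 1 < b r}"
  define f where "f r = (if r < t then r else 2*t - 1 - r)" for r :: nat
  have pair: "b r + b (2*t-1-r) = int (2*t) - 1" if "r < 2*t" for r
    using assms that by (auto simp: SCb_def)
  have "inj_on f A"
  proof (rule inj_onI)
    fix x y assume xy: "x \<in> A" "y \<in> A" "f x = f y"
    show "x = y"
    proof (rule ccontr)
      assume "x \<noteq> y"
      then have "y = 2*t-1-x \<and> x < t \<or> x = 2*t-1-y \<and> y < t" using xy(3) xy(1,2) unfolding f_def A_def
        by (auto split: if_splits)
      then show False
      proof
        assume "y = 2*t-1-x \<and> x < t"
        then show False using pair[of x] xy unfolding A_def by auto
      next
        assume "x = 2*t-1-y \<and> y < t"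
        then show False using pair[of y] xy unfolding A_def by auto
      qed
    qed
  qed
  moreover have "f ` A = {0..<t}"
  proof
    show "f ` A \<subseteq> {0..<t}" unfolding A_def f_def by auto
  next
    show "{0..<t} \<subseteq> f ` A"
    proof
      fix k assume k: "k \<in> {0..<t}"
      show "k \<in> f ` A"
      proof (cases "int t - 1 < b k")
        case True
        then have "k \<in> A" "f k = k" using k unfolding A_def f_def by auto
        then show ?thesis by force
      next
        case False
        have "b k + b (2*t-1-k) = int (2*t) - 1" using pair[of k] k by auto
        then have "2*t-1-k \<in> A" "f (2*t-1-k) = k" using k False unfolding A_def f_def by auto
        then show ?thesis by force
      qed
    qed
  qed
  ultimately have "bij_betw f A {0..<t}" unfolding bij_betw_def by blast
  then show ?thesis unfolding A_def[symmetric] by (simp add: bij_betw_same_card)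
qed

lemma DD_vset:
  assumes "DDb t b"
  shows "set (take t (rev (sort (map b [0..<2*t+2])))) = {x \<in> set (map b [0..<2*t+2]). int (t+1) < x}"
  by (rule Vset) (simp only: count_map DD_count[OF assms])

lemma SC_vset:
  assumes "SCb t b"
  shows "set (take t (rev (sort (map b [0..<2*t])))) = {x \<in> set (map b [0..<2*t]). int t - 1 < x}"
  by (rule Vset) (simp only: count_map SC_count[OF assms])

lemma mod_inj_aux:
  assumes "b r mod int g = int r" "b' r' mod int g = int r'" "b r = b' r'"
  shows "r = r'"
  using assms by simp

lemma DD_eq:
  assumes b1: "DDb t b1" and b2: "DDb t b2"
    and eq: "take t (rev (sort (map b1 [0..<2*t+2]))) = take t (rev (sort (map b2 [0..<2*t+2])))"
    and r: "r < 2*t+2"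
  shows "b1 r = b2 r"
proof -
  have Seq: "{x \<in> set (map b1 [0..<2*t+2]). int (t+1) < x} = {x \<in> set (map b2 [0..<2*t+2]). int (t+1) < x}"
    using DD_vset[OF b1] DD_vset[OF b2] eq by simp
  have big: "b r = b' r" if bb: "DDb t b" "DDb t b'"
    and S: "{x \<in> set (map b [0..<2*t+2]). int (t+1) < x} = {x \<in> set (map b' [0..<2*t+2]). int (t+1) < x}"
    and r: "r < 2*t+2" "int (t+1) < b r" for b b' r
  proof -
    have "b r \<in> {x \<in> set (map b [0..<2*t+2]). int (t+1) < x}" using r by (simp del: upt_Suc)
    then have "b r \<in> {x \<in> set (map b' [0..<2*t+2]). int (t+1) < x}" using S by blast
    then obtain r' where r': "r' < 2*t+2" "b' r' = b r" by (auto simp del: upt_Suc)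
    have "r' = r" using mod_inj_aux[of b' r' "2*t+2" b r] r' r bb by (auto simp: DDb_def)
    then show ?thesis using r' by simp
  qed
  have pair: "b r + b (2*t+2-r) = int (2*t+2)" if "DDb t b" "0 < r" "r < 2*t+2" "r \<noteq> t+1" for b r
    using that by (auto simp: DDb_def)
  show ?thesis
  proof (cases "int (t+1) < b1 r")
    case True then show ?thesis using big[OF b1 b2 Seq r] by simp
  next
    case False
    show ?thesis
    proof (cases "r = 0 \<or> r = t+1")
      case True then show ?thesis using b1 b2 by (auto simp: DDb_def)
    next
      case nf: False
      have "b1 r \<noteq> int (t+1)"
      proof
        assume "b1 r = int (t+1)"
        moreover have "b1 r mod int (2*t+2) = int r" using b1 r by (auto simp: DDb_def)
        ultimately have "int (t+1) mod int (2*t+2) = int r" by simp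
        moreover have "int (t+1) mod int (2*t+2) = int (t+1)" by (intro mod_pos_pos_trivial) auto
        ultimately show False using nf by simp
      qed
      then have lt: "b1 r < int (t+1)" using False by simp
      have p1: "b1 r + b1 (2*t+2-r) = int (2*t+2)" using pair[OF b1] nf r by auto
      have p2: "b2 r + b2 (2*t+2-r) = int (2*t+2)" using pair[OF b2] nf r by auto
      have "int (t+1) < b1 (2*t+2-r)" using p1 lt by simp
      then have "b1 (2*t+2-r) = b2 (2*t+2-r)" using big[OF b1 b2 Seq] nf by simp
      then show ?thesis using p1 p2 by simp
    qed
  qed
qed

lemma SC_eq:
  assumes b1: "SCb t b1" and b2: "SCb t b2"
    and eq: "take t (rev (sort (map b1 [0..<2*t]))) = take t (rev (sort (map b2 [0..<2*t])))"
    and r: "r < 2*t"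
  shows "b1 r = b2 r"
proof -
  have Seq: "{x \<in> set (map b1 [0..<2*t]). int t - 1 < x} = {x \<in> set (map b2 [0..<2*t]). int t - 1 < x}"
    using SC_vset[OF b1] SC_vset[OF b2] eq by simp
  have big: "b r = b' r" if bb: "SCb t b" "SCb t b'"
    and S: "{x \<in> set (map b [0..<2*t]). int t - 1 < x} = {x \<in> set (map b' [0..<2*t]). int t - 1 < x}"
    and r: "r < 2*t" "int t - 1 < b r" for b b' r
  proof -
    have "b r \<in> {x \<in> set (map b [0..<2*t]). int t - 1 < x}" using r by (simp del: upt_Suc)
    then have "b r \<in> {x \<in> set (map b' [0..<2*t]). int t - 1 < x}" using S by blast
    then obtain r' where r': "r' < 2*t" "b' r' = b r" by (auto simp del: upt_Suc)
    have "r' = r" using mod_inj_aux[of b' r' "2*t" b r] r' r bb by (auto simp: SCb_def)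
    then show ?thesis using r' by simp
  qed
  have pair: "b r + b (2*t-1-r) = int (2*t) - 1" if "SCb t b" "r < 2*t" for b r
    using that by (auto simp: SCb_def)
  show ?thesis
  proof (cases "int t - 1 < b1 r")
    case True then show ?thesis using big[OF b1 b2 Seq r] by simp
  next
    case False
    have p1: "b1 r + b1 (2*t-1-r) = int (2*t) - 1" using pair[OF b1] r by auto
    have p2: "b2 r + b2 (2*t-1-r) = int (2*t) - 1" using pair[OF b2] r by auto
    have "int t - 1 < b1 (2*t-1-r)" using p1 False by simp
    then have "b1 (2*t-1-r) = b2 (2*t-1-r)" using big[OF b1 b2 Seq, of "2*t-1-r"] r by simp
    then show ?thesis using p1 p2 by simp
  qed
qed



lemma mod_char:
  fixes a s g :: int
  assumes "0 \<le> s" "s < g" "g dvd (a - s)"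
  shows "a mod g = s"
  using assms by (metis mod_eq_dvd_iff mod_pos_pos_trivial)

lemma beta_determines:
  assumes "is_partition la" "is_partition mu" "is_core g la" "is_core g mu" "1 \<le> g"
    and eq: "\<And>r. r < g \<Longrightarrow> beta g la r = beta g mu r"
  shows "la = mu"
proof -
  interpret L: dset "Sset la" "int g" using Sset_dset assms by blast
  interpret U: dset "Sset mu" "int g" using Sset_dset assms by blast
  have "x \<in> Sset la \<longleftrightarrow> x \<in> Sset mu" for x
  proof -
    define r where "r = nat (x mod int g)"
    have b: "0 \<le> x mod int g" "x mod int g < int g" using assms(5) by auto
    then have r: "int r = x mod int g" "r < g" unfolding r_def by (auto simp: nat_less_iff)
    have "M (Sset la) (int g) (int r) = M (Sset mu) (int g) (int r)"
      using eq[OF r(2)] by (simp add: beta_M)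
    then show ?thesis using L.mem_iff[of x] U.mem_iff[of x] r(1) by simp
  qed
  then have "Sset la = Sset mu" by blast
  then show ?thesis using S_inj assms(1,2) by blast
qed

lemma DD_beta:
  assumes "1 \<le> t" "la \<in> DD_core (2*t+2)"
  shows "DDb t (beta (2*t+2) la)"
proof -
  define g where "g = 2*t+2"
  have la: "is_partition la" "is_DD la" "is_core g la" using assms(2) by (auto simp: DD_core_def g_def)
  interpret L: dset "Sset la" "int g" by (rule Sset_dset[OF la(1,3)]) (simp add: g_def)
  note sym = DD_sym[OF la(1,2)]
  let ?S = "Sset la"
  have bM: "beta g la r = int g + M ?S (int g) (int r)" for r by (rule beta_M)
  have m_out: "M ?S (int g) (int r) + int g \<notin> ?S" if "r < g" for r
  proof
    assume h: "M ?S (int g) (int r) + int g \<in> ?S"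
    have "(M ?S (int g) (int r) + int g) mod int g = int r" using L.M_props(2)[of "int r"] that by simp
    then have "M ?S (int g) (int r) + int g \<le> M ?S (int g) (int r)"
      using L.M_props(3)[of "int r", OF _ _ h] that by simp
    then show False using g_def by simp
  qed
  have p1: "\<forall>r<g. beta g la r mod int g = int r"
    using L.M_props(2) by (simp add: bM)
  have p2: "beta g la r + beta g la (g - r) = int g" if r: "0 < r" "r < g" "r \<noteq> t+1" for r
  proof -
    define m where "m = M ?S (int g) (int r)"
    have m: "m \<in> ?S" "m mod int g = int r" "m + int g \<notin> ?S"
      using L.M_props(1,2)[of "int r"] m_out[of r] r unfolding m_def by auto
    have dv: "int g dvd (m - int r)" using m(2) by (metis mod_eq_dvd_iff mod_mod_trivial)
    have m0: "m \<noteq> 0" using m(2) r by auto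
    have "(m + int g) mod int g = int r" using m(2) by simp
    then have mg0: "m + int g \<noteq> 0" using r(1) by (intro notI) simp
    have "- (m + int g) \<in> ?S" using sym(2)[OF mg0] m(3) by simp
    moreover have "- m \<notin> ?S" using sym(2)[OF m0] m(1) by simp
    moreover have "(- (m + int g)) mod int g = int (g - r)"
    proof (rule mod_char)
      show "int g dvd - (m + int g) - int (g - r)"
      proof -
        have "- (m + int g) - int (g - r) = - (m - int r) - 2 * int g" using r by (simp add: of_nat_diff)
        moreover have "int g dvd - (m - int r) - 2 * int g" using dv by (intro dvd_diff) (metis dvd_minus_iff minus_diff_eq, simp)
        ultimately show ?thesis by simp
      qed
    qed (use r in auto)
    ultimately have "M ?S (int g) (int (g - r)) = - (m + int g)"
      using L.M_unique[of "int (g - r)" "- (m + int g)"] r by simp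
    then show ?thesis by (simp add: bM m_def[symmetric])
  qed
  have p3: "beta g la 0 = 0"
  proof -
    have "int g \<notin> ?S" using L.down[of "int g"] sym(1) by auto
    then have "- int g \<in> ?S" using sym(2)[of "int g"] g_def by simp
    moreover have "(- int g) mod int g = 0" by simp
    moreover have "- int g + int g \<notin> ?S" using sym(1) by simp
    ultimately have "M ?S (int g) 0 = - int g" using L.M_unique[of 0 "- int g"] g_def by simp
    then show ?thesis by (simp add: bM)
  qed
  have p4: "beta g la (t+1) = int (t+1)"
  proof -
    have "int (t+1) \<notin> ?S"
    proof
      assume h: "int (t+1) \<in> ?S"
      then have "int (t+1) - int g \<in> ?S" by (rule L.down)
      then have "- int (t+1) \<in> ?S" using g_def by simp
      then show False using h sym(2)[of "int (t+1)"] by simp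
    qed
    then have a: "- int (t+1) \<in> ?S" using sym(2)[of "int (t+1)"] by simp
    have b: "(- int (t+1)) mod int g = int (t+1)"
    proof (rule mod_char)
      have "- int (t+1) - int (t+1) = - int g" by (simp add: g_def)
      then show "int g dvd - int (t+1) - int (t+1)" by simp
    qed (auto simp: g_def)
    have c: "- int (t+1) + int g \<notin> ?S" using \<open>int (t+1) \<notin> ?S\<close> g_def by simp
    have "M ?S (int g) (int (t+1)) = - int (t+1)"
      using L.M_unique[of "int (t+1)" "- int (t+1)", OF _ _ a b c] g_def by simp
    then show ?thesis using bM[of "t+1"] by (simp add: g_def)
  qed
  show ?thesis unfolding DDb_def g_def[symmetric] using p1 p2 p3 p4 by blast
qed

lemma SC_beta:
  assumes "1 \<le> t" "la \<in> SC_core (2*t)"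
  shows "SCb t (beta (2*t) la)"
proof -
  define g where "g = 2*t"
  have la: "is_partition la" "is_SC la" "is_core g la" using assms(2) by (auto simp: SC_core_def g_def)
  interpret L: dset "Sset la" "int g" by (rule Sset_dset[OF la(1,3)]) (use assms(1) in \<open>simp add: g_def\<close>)
  note sym = SC_sym[OF la(1,2)]
  let ?S = "Sset la"
  have bM: "beta g la r = int g + M ?S (int g) (int r)" for r by (rule beta_M)
  have m_out: "M ?S (int g) (int r) + int g \<notin> ?S" if "r < g" for r
  proof
    assume h: "M ?S (int g) (int r) + int g \<in> ?S"
    have "(M ?S (int g) (int r) + int g) mod int g = int r" using L.M_props(2)[of "int r"] that by simp
    then have "M ?S (int g) (int r) + int g \<le> M ?S (int g) (int r)"
      using L.M_props(3)[of "int r", OF _ _ h] that by simp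
    then show False using g_def assms(1) by simp
  qed
  have p1: "\<forall>r<g. beta g la r mod int g = int r"
    using L.M_props(2) by (simp add: bM)
  have p2: "beta g la r + beta g la (g - 1 - r) = int g - 1" if r: "r < g" for r
  proof -
    define m where "m = M ?S (int g) (int r)"
    have m: "m \<in> ?S" "m mod int g = int r" "m + int g \<notin> ?S"
      using L.M_props(1,2)[of "int r"] m_out[of r] r unfolding m_def by auto
    have dv: "int g dvd (m - int r)" using m(2) by (metis mod_eq_dvd_iff mod_mod_trivial)
    have "- 1 - (m + int g) \<in> ?S" using sym[of "m + int g"] m(3) by simp
    moreover have "- 1 - (m + int g) + int g \<notin> ?S" using sym[of m] m(1) by simp
    moreover have "(- 1 - (m + int g)) mod int g = int (g - 1 - r)"
    proof (rule mod_char)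
      show "int g dvd - 1 - (m + int g) - int (g - 1 - r)"
      proof -
        have "- 1 - (m + int g) - int (g - 1 - r) = - (m - int r) - 2 * int g" using r by (simp add: of_nat_diff)
        moreover have "int g dvd - (m - int r) - 2 * int g" using dv by (intro dvd_diff) (metis dvd_minus_iff minus_diff_eq, simp)
        ultimately show ?thesis by simp
      qed
    qed (use r in auto)
    ultimately have "M ?S (int g) (int (g - 1 - r)) = - 1 - (m + int g)"
      using L.M_unique[of "int (g - 1 - r)" "- 1 - (m + int g)"] r by simp
    then show ?thesis by (simp add: bM m_def[symmetric])
  qed
  show ?thesis unfolding SCb_def g_def[symmetric] using p1 p2 by (simp add: g_def)
qed

theorem proposition3p3:
  fixes t :: nat
  assumes "t \<ge> 1"
  shows "inj_on (Vcoding (2 * t + 2) t) (DD_core (2 * t + 2)) \<and>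
         inj_on (Vcoding (2 * t) t) (SC_core (2 * t))"
proof
  show "inj_on (Vcoding (2 * t + 2) t) (DD_core (2 * t + 2))"
  proof (rule inj_onI)
    fix la mu assume h: "la \<in> DD_core (2*t+2)" "mu \<in> DD_core (2*t+2)"
      "Vcoding (2*t+2) t la = Vcoding (2*t+2) t mu"
    have "beta (2*t+2) la r = beta (2*t+2) mu r" if "r < 2*t+2" for r
      using DD_eq[OF DD_beta[OF assms h(1)] DD_beta[OF assms h(2)] _ that] h(3)
      unfolding Vcoding_def by blast
    then show "la = mu" using beta_determines[of la mu "2*t+2"] h(1,2) by (simp add: DD_core_def)
  qed
  show "inj_on (Vcoding (2 * t) t) (SC_core (2 * t))"
  proof (rule inj_onI)
    fix la mu assume h: "la \<in> SC_core (2*t)" "mu \<in> SC_core (2*t)"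
      "Vcoding (2*t) t la = Vcoding (2*t) t mu"
    have "beta (2*t) la r = beta (2*t) mu r" if "r < 2*t" for r
      using SC_eq[OF SC_beta[OF assms h(1)] SC_beta[OF assms h(2)] _ that] h(3)
      unfolding Vcoding_def by blast
    then show "la = mu" using beta_determines[of la mu "2*t"] h(1,2) assms by (simp add: SC_core_def)
  qed
qed


end
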